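(* Let $H(r)$ and $h(r)$ be nonnegative continuous functions on $(0,1]$, let $\kappa\in(0,1/4)$, $C_0\ge1$, $\gamma\ge0$ and $\theta\in(0,1/8)$. Assume that for every $r\in[\kappa,1/2]$, $$\max_{r\le t\le2r}H(t)\le C_0H(2r),\qquad\max_{r\le t,s\le2r}|h(t)-h(s)|\le C_0H(2r),$$ $$H(\theta r)\le\tfrac12H(r)+C_0\big(\omega_1(\kappa/r)+\omega_2(r)+\gamma\big)\{H(2r)+h(2r)\},$$ where $\omega_1,\omega_2$ are nonnegative nondecreasing functions on $[0,1]$ with $\omega_i(0)=0$ and $\int_0^1\frac{\omega_i(s)}{s}ds<\infty$. Then there is $c_0>0$, depending only on $C_0$ (decreasingly), such that if $\gamma\le c_0|\log\kappa|^{-1}$, then $$\max_{\kappa\le r\le1}\{H(r)+h(r)\}\le C\{H(1)+h(1)\},$$ where $C$ depends only on $C_0,\theta,\omega_1,\omega_2$. *)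

theory Defs
  imports "HOL-Analysis.Analysis"
begin

definition dini_modulus :: "(real \<Rightarrow> real) \<Rightarrow> bool" where
  "dini_modulus \<omega> \<longleftrightarrow>
     (\<forall>s\<in>{0..1}. 0 \<le> \<omega> s) \<and>
     mono_on {0..1} \<omega> \<and>
     \<omega> 0 = 0 \<and>
     (\<lambda>s. \<omega> s / s) integrable_on {0<..1}"

end

theory Submission
  imports Defs
begin

lemma dini_int_sub:
  assumes "dini_modulus \<omega>" "0 < a" "b \<le> 1"
  shows "(\<lambda>s. \<omega> s / s) integrable_on {a..b}"
  using assms unfolding dini_modulus_def
  by (intro integrable_on_subinterval[of _ "{0<..1}"]) auto

lemma dini_core:
  assumes d: "dini_modulus \<omega>" and a: "0 < a" "a \<le> b" "b \<le> 1"
  shows "\<omega> a * (ln b - ln a) \<le> integral {a..b} (\<lambda>s. \<omega> s / s)"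
proof -
  have ln: "((\<lambda>s. 1 / s) has_integral (ln b - ln a)) {a..b}"
  proof (rule fundamental_theorem_of_calculus[OF a(2)])
    fix x assume "x \<in> {a..b}"
    then have "x > 0" using a by auto
    then show "(ln has_vector_derivative 1 / x) (at x within {a..b})"
      by (auto intro!: derivative_eq_intros simp: has_real_derivative_iff_has_vector_derivative[symmetric])
  qed
  have h1: "((\<lambda>s. \<omega> a * (1 / s)) has_integral \<omega> a * (ln b - ln a)) {a..b}"
    using has_integral_mult_right[OF ln] by simp
  have h2: "((\<lambda>s. \<omega> s / s) has_integral integral {a..b} (\<lambda>s. \<omega> s / s)) {a..b}"
    using dini_int_sub[OF d a(1) a(3)] by (simp add: integrable_integral)
  show ?thesis
  proof (rule has_integral_le[OF h1 h2])
    fix x assume x: "x \<in> {a..b}"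
    have mo: "mono_on {0..1} \<omega>" using d unfolding dini_modulus_def by blast
    have "a \<in> {0..1}" "x \<in> {0..1}" "a \<le> x" using x a by auto
    then have "\<omega> a \<le> \<omega> x" by (rule mono_onD[OF mo])
    moreover have "x > 0" using x a by auto
    ultimately have "\<omega> a / x \<le> \<omega> x / x" by (intro divide_right_mono) auto
    then show "\<omega> a * (1 / x) \<le> \<omega> x / x" by simp
  qed
qed

lemma dini_int_le:
  assumes d: "dini_modulus \<omega>" and a: "0 < a" "b \<le> 1"
  shows "integral {a..b} (\<lambda>s. \<omega> s / s) \<le> integral {0<..1} (\<lambda>s. \<omega> s / s)"
proof (cases "a \<le> b")
  case True
  show ?thesis
  proof (rule integral_subset_le)
    show "{a..b} \<subseteq> {0<..1}" using a by auto
    show "(\<lambda>s. \<omega> s / s) integrable_on {a..b}" using dini_int_sub[OF d a] .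
    show "(\<lambda>s. \<omega> s / s) integrable_on {0<..1}" using d unfolding dini_modulus_def by blast
    have nn: "\<forall>s\<in>{0..1}. 0 \<le> \<omega> s" using d unfolding dini_modulus_def by blast
    show "\<forall>x\<in>{0<..1}. 0 \<le> \<omega> x / x"
    proof
      fix x :: real assume "x \<in> {0<..1}"
      then show "0 \<le> \<omega> x / x" using nn by auto
    qed
  qed
next
  case False
  then have "integral {a..b} (\<lambda>s. \<omega> s / s) = 0" by simp
  moreover have "integral {0<..1} (\<lambda>s. \<omega> s / s) \<ge> 0"
  proof (rule integral_nonneg)
    show "(\<lambda>s. \<omega> s / s) integrable_on {0<..1}" using d unfolding dini_modulus_def by blast
    have nn: "\<forall>s\<in>{0..1}. 0 \<le> \<omega> s" using d unfolding dini_modulus_def by blast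
    fix x :: real assume "x \<in> {0<..1}"
    then show "0 \<le> \<omega> x / x" using nn by auto
  qed
  ultimately show ?thesis by simp
qed

lemma dini_step:
  assumes d: "dini_modulus \<omega>" and th: "0 < \<theta>" "\<theta> < 1" and a: "0 < a" "a / \<theta> \<le> 1"
  shows "\<omega> a * ln (1/\<theta>) \<le> integral {a..a/\<theta>} (\<lambda>s. \<omega> s / s)"
proof -
  have "a \<le> a / \<theta>" using th a by (simp add: le_divide_eq)
  from dini_core[OF d a(1) this a(2)]
  have "\<omega> a * (ln (a/\<theta>) - ln a) \<le> integral {a..a/\<theta>} (\<lambda>s. \<omega> s / s)" .
  moreover have "ln (a/\<theta>) - ln a = ln (1/\<theta>)" using th a by (simp add: ln_div)
  ultimately show ?thesis by simp
qed

lemma distr_aux: "(L::real) * (A + b) = L * A + b * L" by (simp add: algebra_simps)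

lemma dini_sum_down:
  assumes d: "dini_modulus \<omega>" and th: "0 < \<theta>" "\<theta> < 1"
  shows "ln (1/\<theta>) * (\<Sum>k\<in>{1..<Suc n}. \<omega> (\<theta>^k)) \<le> integral {\<theta>^n..1} (\<lambda>s. \<omega> s / s)"
proof (induction n)
  case 0
  then show ?case by simp
next
  case (Suc n)
  have p: "0 < \<theta>^Suc n" using th by simp
  have q: "\<theta>^Suc n / \<theta> = \<theta>^n" using th by simp
  have "\<theta>^n \<le> 1" using th by (simp add: power_le_one)
  have st: "\<omega> (\<theta>^Suc n) * ln (1/\<theta>) \<le> integral {\<theta>^Suc n..\<theta>^n} (\<lambda>s. \<omega> s / s)"
    using dini_step[OF d th p] q \<open>\<theta>^n \<le> 1\<close> by simp
  have le: "\<theta>^Suc n \<le> \<theta>^n" using th by (simp add: power_decreasing)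
  have comb: "integral {\<theta>^Suc n..\<theta>^n} (\<lambda>s. \<omega> s / s) + integral {\<theta>^n..1} (\<lambda>s. \<omega> s / s)
      = integral {\<theta>^Suc n..1} (\<lambda>s. \<omega> s / s)"
    by (rule Henstock_Kurzweil_Integration.integral_combine[OF le \<open>\<theta>^n \<le> 1\<close> dini_int_sub[OF d p]]) simp
  have sp: "(\<Sum>k\<in>{1..<Suc (Suc n)}. \<omega> (\<theta>^k)) = (\<Sum>k\<in>{1..<Suc n}. \<omega> (\<theta>^k)) + \<omega> (\<theta>^Suc n)"
    by (rule sum.atLeastLessThan_Suc) simp
  show ?case
    unfolding sp distr_aux using Suc.IH st comb by linarith
qed

lemma dini_sum_up:
  assumes d: "dini_modulus \<omega>" and th: "0 < \<theta>" "\<theta> < 1" and k: "0 < \<kappa>"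
  shows "\<kappa> / \<theta>^Suc n \<le> 1 \<Longrightarrow> ln (1/\<theta>) * (\<Sum>k\<in>{1..<Suc n}. \<omega> (\<kappa>/\<theta>^k)) \<le> integral {\<kappa>/\<theta>..\<kappa>/\<theta>^Suc n} (\<lambda>s. \<omega> s / s)"
proof (induction n)
  case 0
  then show ?case by simp
next
  case (Suc n)
  have le: "\<kappa>/\<theta>^Suc n \<le> \<kappa>/\<theta>^Suc (Suc n)" using th k
    by (intro divide_left_mono mult_pos_pos) (auto simp: power_decreasing)
  have le2: "\<kappa>/\<theta> \<le> \<kappa>/\<theta>^Suc n" using th k
    by (intro divide_left_mono mult_pos_pos) (auto simp: power_decreasing power_le_one)
  have p: "0 < \<kappa>/\<theta>^Suc n" using th k by simp
  have q: "\<kappa>/\<theta>^Suc n / \<theta> = \<kappa>/\<theta>^Suc (Suc n)" using th by simp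
  have IH: "ln (1/\<theta>) * (\<Sum>k\<in>{1..<Suc n}. \<omega> (\<kappa>/\<theta>^k)) \<le> integral {\<kappa>/\<theta>..\<kappa>/\<theta>^Suc n} (\<lambda>s. \<omega> s / s)"
    using Suc.IH Suc.prems le by linarith
  have st: "\<omega> (\<kappa>/\<theta>^Suc n) * ln (1/\<theta>) \<le> integral {\<kappa>/\<theta>^Suc n..\<kappa>/\<theta>^Suc (Suc n)} (\<lambda>s. \<omega> s / s)"
    using dini_step[OF d th p, unfolded q] Suc.prems by simp
  have p2: "0 < \<kappa>/\<theta>" using th k by simp
  have comb: "integral {\<kappa>/\<theta>..\<kappa>/\<theta>^Suc n} (\<lambda>s. \<omega> s / s) + integral {\<kappa>/\<theta>^Suc n..\<kappa>/\<theta>^Suc (Suc n)} (\<lambda>s. \<omega> s / s)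
      = integral {\<kappa>/\<theta>..\<kappa>/\<theta>^Suc (Suc n)} (\<lambda>s. \<omega> s / s)"
    by (rule Henstock_Kurzweil_Integration.integral_combine[OF le2 le dini_int_sub[OF d p2 Suc.prems]])
  have sp: "(\<Sum>k\<in>{1..<Suc (Suc n)}. \<omega> (\<kappa>/\<theta>^k)) = (\<Sum>k\<in>{1..<Suc n}. \<omega> (\<kappa>/\<theta>^k)) + \<omega> (\<kappa>/\<theta>^Suc n)"
    by (rule sum.atLeastLessThan_Suc) simp
  show ?case
    unfolding sp distr_aux using IH st comb by linarith
qed


lemma chainH:
  fixes H :: "real \<Rightarrow> real"
  assumes C0: "1 \<le> C0" and k: "0 < \<kappa>"
    and nn: "\<forall>t\<in>{0<..1}. 0 \<le> H t"
    and dbl: "\<forall>r\<in>{\<kappa>..1/2}. \<forall>t\<in>{r..2*r}. H t \<le> C0 * H (2*r)"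
  shows "\<kappa> \<le> t \<Longrightarrow> t \<le> s \<Longrightarrow> s \<le> 1 \<Longrightarrow> s \<le> 2^m * t \<Longrightarrow> 2*\<kappa> \<le> s \<Longrightarrow> H t \<le> C0^m * H s"
proof (induction m arbitrary: t)
  case 0
  then show ?case by simp
next
  case (Suc m)
  have Hs: "0 \<le> H s" using nn Suc.prems k by auto
  have pm: "1 \<le> C0^m" using C0 by simp
  show ?case
  proof (cases "s \<le> 2*t")
    case True
    have "H t \<le> C0 * H (2*(s/2))"
      using dbl Suc.prems True by (intro dbl[rule_format]) auto
    also have "\<dots> = C0 * H s" by simp
    also have "\<dots> \<le> C0 * (C0^m * H s)"
      using pm Hs C0 by (intro mult_left_mono) (auto simp: mult_le_cancel_right1)
    finally show ?thesis by simp
  next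
    case False
    have "H t \<le> C0 * H (2*t)"
      using Suc.prems False k by (intro dbl[rule_format]) auto
    also have "H (2*t) \<le> C0^m * H s"
      using Suc.prems False k by (intro Suc.IH) auto
    then have "C0 * H (2*t) \<le> C0 * (C0^m * H s)" using C0 by simp
    finally show ?thesis by simp
  qed
qed

lemma chainh:
  fixes H h :: "real \<Rightarrow> real"
  assumes C0: "1 \<le> C0" and k: "0 < \<kappa>"
    and nn: "\<forall>t\<in>{0<..1}. 0 \<le> H t"
    and dbl: "\<forall>r\<in>{\<kappa>..1/2}. \<forall>t\<in>{r..2*r}. H t \<le> C0 * H (2*r)"
    and osc: "\<forall>r\<in>{\<kappa>..1/2}. \<forall>t\<in>{r..2*r}. \<forall>s\<in>{r..2*r}. \<bar>h t - h s\<bar> \<le> C0 * H (2*r)"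
  shows "\<kappa> \<le> t \<Longrightarrow> t \<le> s \<Longrightarrow> s \<le> 1 \<Longrightarrow> s \<le> 2^m * t \<Longrightarrow> 2*\<kappa> \<le> s \<Longrightarrow> \<bar>h t - h s\<bar> \<le> real m * C0^m * H s"
proof (induction m arbitrary: t)
  case 0
  then show ?case by simp
next
  case (Suc m)
  have Hs: "0 \<le> H s" using nn Suc.prems k by auto
  have pm: "1 \<le> C0^m" using C0 by simp
  have pm1: "1 \<le> C0^Suc m" using C0 by (simp only: one_le_power)
  show ?case
  proof (cases "s \<le> 2*t")
    case True
    have "\<bar>h t - h s\<bar> \<le> C0 * H (2*(s/2))"
      using Suc.prems True by (intro osc[rule_format]) auto
    also have "\<dots> = C0 * H s" by simp
    also have "\<dots> \<le> C0^Suc m * H s"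
      using pm Hs C0 by (intro mult_right_mono) (auto simp: mult_le_cancel_left1)
    also have "\<dots> \<le> real (Suc m) * C0^Suc m * H s"
      using pm1 Hs C0 by (intro mult_right_mono) (auto simp: algebra_simps)
    finally show ?thesis .
  next
    case False
    have a: "\<bar>h t - h (2*t)\<bar> \<le> C0 * H (2*t)"
      using Suc.prems False k by (intro osc[rule_format]) auto
    have b: "H (2*t) \<le> C0^m * H s"
      using Suc.prems False k by (intro chainH[OF C0 k nn dbl]) auto
    have c: "\<bar>h (2*t) - h s\<bar> \<le> real m * C0^m * H s"
      using Suc.prems False k by (intro Suc.IH) auto
    have d: "C0 * H (2*t) \<le> C0^Suc m * H s" using b C0 by simp
    have e: "real m * C0^m * H s \<le> real m * C0^Suc m * H s"
      using pm Hs C0 by (intro mult_right_mono mult_left_mono) auto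
    have "\<bar>h t - h s\<bar> \<le> \<bar>h t - h (2*t)\<bar> + \<bar>h (2*t) - h s\<bar>" by simp
    also have "\<dots> \<le> C0^Suc m * H s + real m * C0^Suc m * H s" using a c d e by linarith
    also have "\<dots> = real (Suc m) * C0^Suc m * H s" by (simp add: algebra_simps)
    finally show ?thesis .
  qed
qed


lemma main_inner:
  fixes C0 \<theta> :: real and \<omega>1 \<omega>2 :: "real \<Rightarrow> real"
  assumes C0: "C0 \<ge> 1" and th0: "0 < \<theta>" and th1: "\<theta> < 1/8"
    and d1: "dini_modulus \<omega>1" and d2: "dini_modulus \<omega>2"
  shows "\<exists>C::real. \<forall>(H::real \<Rightarrow> real) (h::real \<Rightarrow> real) (\<kappa>::real) (\<gamma>::real).
           continuous_on {0<..1} H \<longrightarrow> continuous_on {0<..1} h \<longrightarrow>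
           (\<forall>t\<in>{0<..1}. 0 \<le> H t \<and> 0 \<le> h t) \<longrightarrow>
           0 < \<kappa> \<longrightarrow> \<kappa> < 1/4 \<longrightarrow> 0 \<le> \<gamma> \<longrightarrow>
           (\<forall>r\<in>{\<kappa>..1/2}.
              (\<forall>t\<in>{r..2*r}. H t \<le> C0 * H (2*r)) \<and>
              (\<forall>t\<in>{r..2*r}. \<forall>s\<in>{r..2*r}. \<bar>h t - h s\<bar> \<le> C0 * H (2*r)) \<and>
              H (\<theta> * r) \<le> H r / 2 +
                 C0 * (\<omega>1 (\<kappa> / r) + \<omega>2 r + \<gamma>) * (H (2*r) + h (2*r))) \<longrightarrow>
           \<gamma> \<le> 1 / \<bar>ln \<kappa>\<bar> \<longrightarrow>
           (\<forall>r\<in>{\<kappa>..1}. H r + h r \<le> C * (H 1 + h 1))"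
proof -
  define L where "L = ln (1/\<theta>)"
  have L0: "0 < L" unfolding L_def using th0 th1 by simp
  obtain m :: nat where m: "2/\<theta> < 2^m" using real_arch_pow[of 2 "2/\<theta>"] by auto
  have m\<theta>: "2 \<le> 2^m * \<theta>"
  proof -
    have "2 / \<theta> * \<theta> \<le> 2^m * \<theta>" using m th0 by (intro mult_right_mono) auto
    then show ?thesis using th0 by simp
  qed
  define K where "K = (real m + 1) * C0^m"
  have K1: "1 \<le> K"
  proof -
    have "1 * 1 \<le> (real m + 1) * C0^m" using C0 by (intro mult_mono) auto
    then show ?thesis unfolding K_def by simp
  qed
  define I1 where "I1 = integral {0<..1} (\<lambda>s. \<omega>1 s / s)"
  define I2 where "I2 = integral {0<..1} (\<lambda>s. \<omega>2 s / s)"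
  define \<beta> where "\<beta> = 2 * K * C0"
  have \<beta>0: "0 \<le> \<beta>" unfolding \<beta>_def using K1 C0 by simp
  define E where "E = 2 * \<beta> * (I1 / L + I2 / L + 1 / L)"
  define C where "C = 2 * K + K * (1 + 2 * K) * exp E"
  show ?thesis
  proof (rule exI[of _ C], intro allI impI)
    fix H h :: "real \<Rightarrow> real" and \<kappa> \<gamma> :: real
    assume nnb: "\<forall>t\<in>{0<..1}. 0 \<le> H t \<and> 0 \<le> h t"
      and k0: "0 < \<kappa>" and k1: "\<kappa> < 1/4" and g0: "0 \<le> \<gamma>"
      and hyp: "\<forall>r\<in>{\<kappa>..1/2}.
              (\<forall>t\<in>{r..2*r}. H t \<le> C0 * H (2*r)) \<and>
              (\<forall>t\<in>{r..2*r}. \<forall>s\<in>{r..2*r}. \<bar>h t - h s\<bar> \<le> C0 * H (2*r)) \<and>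
              H (\<theta> * r) \<le> H r / 2 +
                 C0 * (\<omega>1 (\<kappa> / r) + \<omega>2 r + \<gamma>) * (H (2*r) + h (2*r))"
      and g1: "\<gamma> \<le> 1 / \<bar>ln \<kappa>\<bar>"
    have nn: "\<forall>t\<in>{0<..1}. 0 \<le> H t" using nnb by blast
    have nnh: "\<forall>t\<in>{0<..1}. 0 \<le> h t" using nnb by blast
    have dbl: "\<forall>r\<in>{\<kappa>..1/2}. \<forall>t\<in>{r..2*r}. H t \<le> C0 * H (2*r)" using hyp by blast
    have osc: "\<forall>r\<in>{\<kappa>..1/2}. \<forall>t\<in>{r..2*r}. \<forall>s\<in>{r..2*r}. \<bar>h t - h s\<bar> \<le> C0 * H (2*r)"
      using hyp by blast
    have dec: "\<And>r. r \<in> {\<kappa>..1/2} \<Longrightarrow> H (\<theta> * r) \<le> H r / 2 +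
                 C0 * (\<omega>1 (\<kappa> / r) + \<omega>2 r + \<gamma>) * (H (2*r) + h (2*r))" using hyp by blast
    have cH: "H t \<le> K * H s" if "\<kappa> \<le> t" "t \<le> s" "s \<le> 1" "s \<le> 2^m * t" "2*\<kappa> \<le> s" for t s
    proof -
      have "H t \<le> C0^m * H s" using chainH[OF C0 k0 nn dbl] that by blast
      also have "\<dots> \<le> K * H s" unfolding K_def using nn that k0 C0
        by (intro mult_right_mono) auto
      finally show ?thesis .
    qed
    have ch: "\<bar>h t - h s\<bar> \<le> K * H s" if "\<kappa> \<le> t" "t \<le> s" "s \<le> 1" "s \<le> 2^m * t" "2*\<kappa> \<le> s" for t s
    proof -
      have "\<bar>h t - h s\<bar> \<le> real m * C0^m * H s" using chainh[OF C0 k0 nn dbl osc] that by blast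
      also have "\<dots> \<le> K * H s" unfolding K_def using nn that k0 C0
        by (intro mult_right_mono) (auto simp: algebra_simps)
      finally show ?thesis .
    qed
    define a where "a = (\<lambda>k::nat. H (\<theta>^k))"
    define \<epsilon> where "\<epsilon> = (\<lambda>k::nat. \<omega>1 (\<kappa> / \<theta>^k) + \<omega>2 (\<theta>^k) + \<gamma>)"
    define \<Phi> where "\<Phi> = (\<lambda>n. (\<Sum>j<n. a j) + 2 * a n)"
    have thp: "0 < \<theta>^k" for k using th0 by simp
    have thle: "\<theta>^k \<le> 1" for k using th0 th1 by (simp add: power_le_one)
    have a0: "0 \<le> a k" for k unfolding a_def using nn thp thle by auto
    have h1: "0 \<le> h 1" using nnh by auto
    have H1: "0 \<le> H 1" using nn by auto
    have F1: "\<kappa> \<le> \<theta>^n \<Longrightarrow> h (\<theta>^n) \<le> h 1 + K * (\<Sum>j<n. a j)" for n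
    proof (induction n)
      case 0 then show ?case by simp
    next
      case (Suc n)
      have e: "\<theta>^Suc n = \<theta> * \<theta>^n" by simp
      have tn: "0 < \<theta>^n" by (rule thp)
      have kS: "\<kappa> \<le> \<theta> * \<theta>^n" using Suc.prems by simp
      have l1: "\<theta> * \<theta>^n \<le> 1 * \<theta>^n" using th1 tn by (intro mult_right_mono) auto
      have l8: "\<theta> * \<theta>^n \<le> (1/8) * \<theta>^n" using th1 tn by (intro mult_right_mono) auto
      have l2: "2 * \<theta>^n \<le> (2^m * \<theta>) * \<theta>^n" using m\<theta> tn by (intro mult_right_mono) auto
      have l3: "(2^m * \<theta>) * \<theta>^n = 2^m * (\<theta> * \<theta>^n)" by (simp only: mult.assoc)
      have le: "\<theta>^Suc n \<le> \<theta>^n" unfolding e using l1 by simp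
      have "\<kappa> \<le> \<theta>^n" using kS l1 by linarith
      then have IH: "h (\<theta>^n) \<le> h 1 + K * (\<Sum>j<n. a j)" by (rule Suc.IH)
      have c1: "\<theta>^n \<le> 2^m * \<theta>^Suc n" unfolding e using l2 l3 tn by linarith
      have c2: "2 * \<kappa> \<le> \<theta>^n" using kS l8 tn by linarith
      have "\<bar>h (\<theta>^Suc n) - h (\<theta>^n)\<bar> \<le> K * a n" unfolding a_def
        using ch[OF Suc.prems le thle c1 c2] .
      then show ?case using IH by (simp add: algebra_simps)
    qed
    have F2: "H (\<theta>^Suc (Suc p)) \<le> a (Suc p) / 2 + \<beta> * \<epsilon> (Suc p) * (h 1 + (\<Sum>j<Suc p. a j))"
      if kp: "\<kappa> \<le> \<theta>^Suc (Suc p)" for p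
    proof -
      define r where "r = \<theta>^Suc p"
      have e1: "r = \<theta> * \<theta>^p" unfolding r_def by simp
      have e2: "\<theta>^Suc (Suc p) = \<theta> * r" unfolding r_def by simp
      have tp: "0 < \<theta>^p" by (rule thp)
      have r0: "0 < r" unfolding r_def by (rule thp)
      have kr0: "\<kappa> \<le> \<theta> * r" using kp unfolding e2 .
      have l1: "\<theta> * r \<le> 1 * r" using th1 r0 by (intro mult_right_mono) auto
      have kr: "\<kappa> \<le> r" using kr0 l1 by linarith
      have l4: "\<theta> * \<theta>^p \<le> \<theta> * 1" using th0 thle[of p] by (intro mult_left_mono) auto
      have rh: "r \<le> 1/2" unfolding e1 using l4 th1 by linarith
      have l8: "\<theta> * \<theta>^p \<le> (1/8) * \<theta>^p" using th1 tp by (intro mult_right_mono) auto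
      have r2: "2 * r \<le> \<theta>^p" unfolding e1 using l8 tp by linarith
      have l2: "2 * \<theta>^p \<le> (2^m * \<theta>) * \<theta>^p" using m\<theta> tp by (intro mult_right_mono) auto
      have l3: "2^m * (2 * r) = 2 * ((2^m * \<theta>) * \<theta>^p)" unfolding e1 by (simp add: algebra_simps)
      have r3: "\<theta>^p \<le> 2^m * (2 * r)" using l2 l3 tp by linarith
      have r4: "2 * \<kappa> \<le> \<theta>^p" using kr0 l1 r2 r0 by linarith
      have k2: "\<kappa> \<le> 2 * r" using kr k0 by linarith
      have D: "H (\<theta> * r) \<le> H r / 2 + C0 * (\<omega>1 (\<kappa> / r) + \<omega>2 r + \<gamma>) * (H (2*r) + h (2*r))"
        using kr rh by (intro dec) auto
      have HH: "H (2*r) \<le> K * a p" unfolding a_def using cH[OF k2 r2 thle r3 r4] .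
      have hh: "\<bar>h (2*r) - h (\<theta>^p)\<bar> \<le> K * a p" unfolding a_def using ch[OF k2 r2 thle r3 r4] .
      have kp2: "\<kappa> \<le> \<theta>^p" using r4 k0 by linarith
      have Fp: "h (\<theta>^p) \<le> h 1 + K * (\<Sum>j<p. a j)" using F1[OF kp2] .
      have Sp: "0 \<le> (\<Sum>j<p. a j)" using a0 by (simp add: sum_nonneg)
      have SS: "(\<Sum>j<Suc p. a j) = (\<Sum>j<p. a j) + a p" by simp
      have KS: "K * (\<Sum>j<Suc p. a j) = K * (\<Sum>j<p. a j) + K * a p" unfolding SS by (simp add: distrib_left)
      have Kap: "K * a p \<le> K * (\<Sum>j<Suc p. a j)" unfolding SS using Sp K1 by (intro mult_left_mono) auto
      have hK0: "1 * h 1 \<le> (2 * K) * h 1" using h1 K1 by (intro mult_right_mono) auto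
      have hK: "h 1 \<le> (2 * K) * h 1" using hK0 by simp
      have dK: "2 * K * (h 1 + (\<Sum>j<Suc p. a j)) = (2 * K) * h 1 + 2 * (K * (\<Sum>j<Suc p. a j))"
        by (simp add: algebra_simps)
      have HS: "H (2*r) + h (2*r) \<le> 2 * K * (h 1 + (\<Sum>j<Suc p. a j))"
        using HH hh Fp KS Kap hK dK by linarith
      have kr1: "\<kappa> / r \<le> 1" using kr r0 by simp
      have kr2: "0 \<le> \<kappa> / r" using k0 r0 by simp
      have w1: "0 \<le> \<omega>1 (\<kappa> / r)" using d1 kr1 kr2 unfolding dini_modulus_def by auto
      have w2: "0 \<le> \<omega>2 r" using d2 r0 rh unfolding dini_modulus_def by auto
      have ep0: "\<epsilon> (Suc p) = \<omega>1 (\<kappa> / r) + \<omega>2 r + \<gamma>" unfolding \<epsilon>_def r_def by simp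
      have ep: "0 \<le> \<epsilon> (Suc p)" unfolding ep0 using w1 w2 g0 by linarith
      have "C0 * \<epsilon> (Suc p) * (H (2*r) + h (2*r)) \<le> C0 * \<epsilon> (Suc p) * (2 * K * (h 1 + (\<Sum>j<Suc p. a j)))"
        using HS ep C0 by (intro mult_left_mono) auto
      also have "\<dots> = \<beta> * \<epsilon> (Suc p) * (h 1 + (\<Sum>j<Suc p. a j))" unfolding \<beta>_def by simp
      finally have X: "C0 * \<epsilon> (Suc p) * (H (2*r) + h (2*r)) \<le> \<beta> * \<epsilon> (Suc p) * (h 1 + (\<Sum>j<Suc p. a j))" .
      have Y: "H (\<theta>^Suc (Suc p)) = H (\<theta> * r)" unfolding e2 ..
      have Z: "a (Suc p) = H r" unfolding a_def r_def by simp
      show ?thesis unfolding Y Z using D X unfolding ep0 by linarith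
    qed
    have eps0: "0 \<le> \<epsilon> k" if kk: "\<kappa> \<le> \<theta>^k" for k
    proof -
      have tk: "0 < \<theta>^k" by (rule thp)
      have kr1: "\<kappa> / \<theta>^k \<le> 1" using kk tk by simp
      have kr2: "0 \<le> \<kappa> / \<theta>^k" using k0 tk by simp
      have w1: "0 \<le> \<omega>1 (\<kappa> / \<theta>^k)" using d1 kr1 kr2 unfolding dini_modulus_def by auto
      have w2: "0 \<le> \<omega>2 (\<theta>^k)" using d2 tk thle[of k] unfolding dini_modulus_def by auto
      show ?thesis unfolding \<epsilon>_def using w1 w2 g0 by linarith
    qed
    have G: "\<kappa> \<le> \<theta>^Suc p \<Longrightarrow> h 1 + \<Phi> (Suc p) \<le> (h 1 + \<Phi> 1) * exp (2 * \<beta> * (\<Sum>k\<in>{1..<Suc p}. \<epsilon> k))" for p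
    proof (induction p)
      case 0 then show ?case by simp
    next
      case (Suc p)
      have tp: "0 < \<theta>^Suc p" by (rule thp)
      have l1: "\<theta> * \<theta>^Suc p \<le> 1 * \<theta>^Suc p" using th1 tp by (intro mult_right_mono) auto
      have kp: "\<kappa> \<le> \<theta>^Suc p" using Suc.prems l1 by simp
      have IH: "h 1 + \<Phi> (Suc p) \<le> (h 1 + \<Phi> 1) * exp (2 * \<beta> * (\<Sum>k\<in>{1..<Suc p}. \<epsilon> k))"
        using Suc.IH[OF kp] .
      have F: "a (Suc (Suc p)) \<le> a (Suc p) / 2 + \<beta> * \<epsilon> (Suc p) * (h 1 + (\<Sum>j<Suc p. a j))"
        using F2[OF Suc.prems] unfolding a_def .
      have ep: "0 \<le> \<epsilon> (Suc p)" using eps0[OF kp] .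
      define S where "S = (\<Sum>j<Suc p. a j)"
      define X where "X = h 1 + \<Phi> (Suc p)"
      define e where "e = \<epsilon> (Suc p)"
      define T where "T = (\<Sum>k\<in>{1..<Suc p}. \<epsilon> k)"
      have P1: "\<Phi> (Suc p) = S + 2 * a (Suc p)" unfolding \<Phi>_def S_def by simp
      have P2: "\<Phi> (Suc (Suc p)) = S + a (Suc p) + 2 * a (Suc (Suc p))" unfolding \<Phi>_def S_def by simp
      have be: "0 \<le> 2 * \<beta> * e" unfolding e_def using \<beta>0 ep by simp
      have SX: "h 1 + S \<le> X" unfolding X_def P1 using a0[of "Suc p"] by simp
      have m1: "2 * \<beta> * e * (h 1 + S) \<le> 2 * \<beta> * e * X" using be SX by (intro mult_left_mono)
      have F': "2 * a (Suc (Suc p)) \<le> a (Suc p) + 2 * \<beta> * e * (h 1 + S)"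
        using F unfolding S_def e_def by (simp add: algebra_simps)
      have X0: "0 \<le> X" unfolding X_def P1 using h1 a0[of "Suc p"] S_def
        by (simp add: sum_nonneg a0)
      have st1: "h 1 + \<Phi> (Suc (Suc p)) \<le> X + 2 * \<beta> * e * X"
        unfolding P2 using F' m1 unfolding X_def P1 by linarith
      have st2: "X + 2 * \<beta> * e * X = (1 + 2 * \<beta> * e) * X" by (simp add: algebra_simps)
      have st3: "(1 + 2 * \<beta> * e) * X \<le> exp (2 * \<beta> * e) * X"
        using X0 by (intro mult_right_mono) (rule exp_ge_add_one_self, simp)
      have st4: "exp (2 * \<beta> * e) * X \<le> exp (2 * \<beta> * e) * ((h 1 + \<Phi> 1) * exp (2 * \<beta> * T))"
        using IH unfolding X_def T_def by (intro mult_left_mono) auto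
      have sp: "(\<Sum>k\<in>{1..<Suc (Suc p)}. \<epsilon> k) = T + e"
        unfolding T_def e_def by (rule sum.atLeastLessThan_Suc) simp
      have st5: "exp (2 * \<beta> * e) * ((h 1 + \<Phi> 1) * exp (2 * \<beta> * T)) = (h 1 + \<Phi> 1) * exp (2 * \<beta> * (T + e))"
        by (simp add: distrib_left exp_add mult_ac)
      show ?case unfolding sp using st1 st2 st3 st4 st5 by linarith
    qed
    have lk: "ln \<kappa> < 0" using k0 k1 by simp
    have gk: "\<gamma> * (- ln \<kappa>) \<le> 1"
    proof -
      have nl: "0 < - ln \<kappa>" using lk by simp
      have q: "\<gamma> \<le> 1 / (- ln \<kappa>)" using g1 lk by simp
      show ?thesis by (rule iffD1[OF pos_le_divide_eq[OF nl] q])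
    qed
    have lnL: "ln \<theta> = - L" unfolding L_def using th0 by (simp add: ln_div)
    have SB: "(\<Sum>k\<in>{1..<Suc p}. \<epsilon> k) \<le> I1 / L + I2 / L + 1 / L" if kp: "\<kappa> \<le> \<theta>^Suc p" for p
    proof -
      have tp: "0 < \<theta>^Suc p" by (rule thp)
      have th1': "\<theta> < 1" using th1 by simp
      have q1: "\<kappa> / \<theta>^Suc p \<le> 1" using kp tp by simp
      have q2: "0 < \<kappa> / \<theta>" using k0 th0 by simp
      have A1a: "L * (\<Sum>k\<in>{1..<Suc p}. \<omega>1 (\<kappa>/\<theta>^k)) \<le> integral {\<kappa>/\<theta>..\<kappa>/\<theta>^Suc p} (\<lambda>s. \<omega>1 s / s)"
        unfolding L_def using dini_sum_up[OF d1 th0 th1' k0 q1] .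
      have A1b: "integral {\<kappa>/\<theta>..\<kappa>/\<theta>^Suc p} (\<lambda>s. \<omega>1 s / s) \<le> I1"
        unfolding I1_def using dini_int_le[OF d1 q2 q1] .
      have A1: "(\<Sum>k\<in>{1..<Suc p}. \<omega>1 (\<kappa>/\<theta>^k)) \<le> I1 / L"
        using A1a A1b L0 by (simp add: pos_le_divide_eq mult.commute)
      have A2a: "L * (\<Sum>k\<in>{1..<Suc p}. \<omega>2 (\<theta>^k)) \<le> integral {\<theta>^p..1} (\<lambda>s. \<omega>2 s / s)"
        unfolding L_def using dini_sum_down[OF d2 th0 th1'] .
      have A2b: "integral {\<theta>^p..1} (\<lambda>s. \<omega>2 s / s) \<le> I2"
        unfolding I2_def using dini_int_le[OF d2 thp[of p], of 1] by simp
      have A2: "(\<Sum>k\<in>{1..<Suc p}. \<omega>2 (\<theta>^k)) \<le> I2 / L"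
        using A2a A2b L0 by (simp add: pos_le_divide_eq mult.commute)
      have A3a: "(\<Sum>k\<in>{1..<Suc p}. \<gamma>) = real p * \<gamma>" by simp
      have "ln \<kappa> \<le> ln (\<theta>^Suc p)" using kp k0 tp by simp
      also have "\<dots> = real (Suc p) * ln \<theta>" by (rule ln_realpow)
      finally have "real (Suc p) * L \<le> - ln \<kappa>" unfolding lnL by simp
      then have pL: "real p * L \<le> - ln \<kappa>" using L0 by (simp add: algebra_simps)
      have "\<gamma> * (real p * L) \<le> \<gamma> * (- ln \<kappa>)" using pL g0 by (intro mult_left_mono)
      then have "(real p * \<gamma>) * L \<le> 1" using gk by (simp add: mult_ac)
      then have A3: "real p * \<gamma> \<le> 1 / L" using L0 by (simp add: pos_le_divide_eq)
      have sd: "(\<Sum>k\<in>{1..<Suc p}. \<epsilon> k) = (\<Sum>k\<in>{1..<Suc p}. \<omega>1 (\<kappa>/\<theta>^k)) + (\<Sum>k\<in>{1..<Suc p}. \<omega>2 (\<theta>^k)) + (\<Sum>k\<in>{1..<Suc p}. \<gamma>)"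
        unfolding \<epsilon>_def by (simp add: sum.distrib)
      show ?thesis unfolding sd A3a using A1 A2 A3 by linarith
    qed
    have k2: "2 * \<kappa> \<le> 1" using k1 by simp
    show "\<forall>r\<in>{\<kappa>..1}. H r + h r \<le> C * (H 1 + h 1)"
    proof
      fix t assume t: "t \<in> {\<kappa>..1}"
      then have kt: "\<kappa> \<le> t" and t1: "t \<le> 1" by auto
      have t0: "0 < t" using kt k0 by linarith
      define x where "x = max t (2 * \<kappa>)"
      have x0: "0 < x" unfolding x_def using t0 by simp
      have x1: "x \<le> 1" unfolding x_def using t1 k2 by simp
      have th1': "\<theta> < 1" using th1 by simp
      have ex: "\<exists>n. \<theta>^n < x" using real_arch_pow_inv[OF x0 th1'] .
      have nz: "\<not> \<theta>^0 < x" using x1 by simp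
      obtain n where n1: "\<not> \<theta>^n < x" and n2: "\<theta>^Suc n < x"
        using exists_least_lemma[of "\<lambda>n. \<theta>^n < x", OF nz ex] by blast
      have xs: "x \<le> \<theta>^n" using n1 by simp
      have ts: "t \<le> \<theta>^n" using xs unfolding x_def by simp
      have ks: "2 * \<kappa> \<le> \<theta>^n" using xs unfolding x_def by simp
      have ks1: "\<kappa> \<le> \<theta>^n" using ks k0 by simp
      have x2t: "x \<le> 2 * t" unfolding x_def using kt t0 by simp
      have q1: "\<theta> * \<theta>^n < 2 * t" using n2 x2t by simp
      have q2: "2 * t \<le> (2^m * \<theta>) * t" using m\<theta> t0 by (intro mult_right_mono) auto
      have q3: "(2^m * \<theta>) * t = \<theta> * (2^m * t)" by (simp add: mult_ac)
      have "\<theta> * \<theta>^n < \<theta> * (2^m * t)" using q1 q2 q3 by linarith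
      then have sm: "\<theta>^n \<le> 2^m * t" using th0 by simp
      have Ht: "H t \<le> K * a n" unfolding a_def using cH[OF kt ts thle sm ks] .
      have ht: "\<bar>h t - h (\<theta>^n)\<bar> \<le> K * a n" unfolding a_def using ch[OF kt ts thle sm ks] .
      have hs: "h (\<theta>^n) \<le> h 1 + K * (\<Sum>j<n. a j)" using F1[OF ks1] .
      have KP: "K * \<Phi> n = K * (\<Sum>j<n. a j) + 2 * (K * a n)" unfolding \<Phi>_def by (simp add: algebra_simps)
      have hK0: "1 * h 1 \<le> K * h 1" using h1 K1 by (intro mult_right_mono) auto
      have KX: "K * (h 1 + \<Phi> n) = K * h 1 + K * \<Phi> n" by (simp add: algebra_simps)
      have main: "H t + h t \<le> K * (h 1 + \<Phi> n)" using Ht ht hs KP hK0 KX by linarith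
      have HhN: "0 \<le> H 1 + h 1" using H1 h1 by simp
      have eE: "0 \<le> K * (1 + 2 * K) * exp E" using K1 by simp
      show "H t + h t \<le> C * (H 1 + h 1)"
      proof (cases n)
        case 0
        have "K * (h 1 + \<Phi> n) = K * (h 1 + 2 * H 1)" unfolding 0 \<Phi>_def a_def by simp
        also have "\<dots> \<le> (2 * K) * (H 1 + h 1)" using K1 H1 h1 by (simp add: algebra_simps)
        also have "\<dots> \<le> C * (H 1 + h 1)" unfolding C_def using HhN eE by (intro mult_right_mono) auto
        finally show ?thesis using main by linarith
      next
        case (Suc p)
        have kp: "\<kappa> \<le> \<theta>^Suc p" using ks1 Suc by simp
        have Gp: "h 1 + \<Phi> (Suc p) \<le> (h 1 + \<Phi> 1) * exp (2 * \<beta> * (\<Sum>k\<in>{1..<Suc p}. \<epsilon> k))"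
          using G[OF kp] .
        have "2 * \<beta> * (\<Sum>k\<in>{1..<Suc p}. \<epsilon> k) \<le> 2 * \<beta> * (I1 / L + I2 / L + 1 / L)"
          using SB[OF kp] \<beta>0 by (intro mult_left_mono) auto
        then have eb: "exp (2 * \<beta> * (\<Sum>k\<in>{1..<Suc p}. \<epsilon> k)) \<le> exp E" unfolding E_def by simp
        have l1: "\<theta> * \<theta>^p \<le> \<theta> * 1" using th0 thle[of p] by (intro mult_left_mono) auto
        have kth: "\<kappa> \<le> \<theta>" using kp l1 by simp
        have o1: "1 \<le> 2^m * \<theta>" using m\<theta> by simp
        have Hth: "H \<theta> \<le> K * H 1" using cH[OF kth _ _ o1 k2] th1 by simp
        have P1: "\<Phi> 1 = H 1 + 2 * H \<theta>" unfolding \<Phi>_def a_def by simp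
        have KH: "2 * (K * H 1) \<le> 2 * (K * H 1) + 2 * (K * h 1)" using K1 h1 by simp
        have hP: "h 1 + \<Phi> 1 \<le> (1 + 2 * K) * (H 1 + h 1)"
          unfolding P1 using Hth KH by (simp add: algebra_simps)
        have hP0: "0 \<le> h 1 + \<Phi> 1" unfolding P1 using h1 H1 nn th0 th1 by auto
        have "(h 1 + \<Phi> 1) * exp (2 * \<beta> * (\<Sum>k\<in>{1..<Suc p}. \<epsilon> k)) \<le> (h 1 + \<Phi> 1) * exp E"
          using eb hP0 by (intro mult_left_mono)
        also have "\<dots> \<le> ((1 + 2 * K) * (H 1 + h 1)) * exp E" using hP by (intro mult_right_mono) auto
        finally have Z: "h 1 + \<Phi> n \<le> ((1 + 2 * K) * (H 1 + h 1)) * exp E" using Gp Suc by simp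
        have "K * (h 1 + \<Phi> n) \<le> K * (((1 + 2 * K) * (H 1 + h 1)) * exp E)"
          using Z K1 by (intro mult_left_mono) auto
        also have "\<dots> = (K * (1 + 2 * K) * exp E) * (H 1 + h 1)" by (simp add: mult_ac)
        also have "\<dots> \<le> C * (H 1 + h 1)" unfolding C_def using HhN K1 by (intro mult_right_mono) auto
        finally show ?thesis using main by linarith
      qed
    qed
  qed
qed

theorem lemma4p9:
  "\<exists>c0 :: real \<Rightarrow> real.
     (\<forall>C0\<ge>1. c0 C0 > 0) \<and>
     (\<forall>C0 C0'. 1 \<le> C0 \<longrightarrow> C0 \<le> C0' \<longrightarrow> c0 C0' \<le> c0 C0) \<and>
     (\<forall>C0 \<theta> \<omega>1 \<omega>2. C0 \<ge> 1 \<longrightarrow> 0 < \<theta> \<longrightarrow> \<theta> < 1/8 \<longrightarrow>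
        dini_modulus \<omega>1 \<longrightarrow> dini_modulus \<omega>2 \<longrightarrow>
        (\<exists>C::real. \<forall>(H::real \<Rightarrow> real) (h::real \<Rightarrow> real) (\<kappa>::real) (\<gamma>::real).
           continuous_on {0<..1} H \<longrightarrow> continuous_on {0<..1} h \<longrightarrow>
           (\<forall>t\<in>{0<..1}. 0 \<le> H t \<and> 0 \<le> h t) \<longrightarrow>
           0 < \<kappa> \<longrightarrow> \<kappa> < 1/4 \<longrightarrow> 0 \<le> \<gamma> \<longrightarrow>
           (\<forall>r\<in>{\<kappa>..1/2}.
              (\<forall>t\<in>{r..2*r}. H t \<le> C0 * H (2*r)) \<and>
              (\<forall>t\<in>{r..2*r}. \<forall>s\<in>{r..2*r}. \<bar>h t - h s\<bar> \<le> C0 * H (2*r)) \<and>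
              H (\<theta> * r) \<le> H r / 2 +
                 C0 * (\<omega>1 (\<kappa> / r) + \<omega>2 r + \<gamma>) * (H (2*r) + h (2*r))) \<longrightarrow>
           \<gamma> \<le> c0 C0 / \<bar>ln \<kappa>\<bar> \<longrightarrow>
           (\<forall>r\<in>{\<kappa>..1}. H r + h r \<le> C * (H 1 + h 1))))"
proof (rule exI[of _ "\<lambda>_. 1"], intro conjI)
  show "\<forall>C0\<ge>1. (\<lambda>_. 1::real) C0 > 0" by simp
  show "\<forall>C0 C0'. 1 \<le> C0 \<longrightarrow> C0 \<le> C0' \<longrightarrow> (\<lambda>_. 1::real) C0' \<le> (\<lambda>_. 1::real) C0" by simp
  show "\<forall>C0 \<theta> \<omega>1 \<omega>2. C0 \<ge> 1 \<longrightarrow> 0 < \<theta> \<longrightarrow> \<theta> < 1/8 \<longrightarrow>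
        dini_modulus \<omega>1 \<longrightarrow> dini_modulus \<omega>2 \<longrightarrow>
        (\<exists>C::real. \<forall>(H::real \<Rightarrow> real) (h::real \<Rightarrow> real) (\<kappa>::real) (\<gamma>::real).
           continuous_on {0<..1} H \<longrightarrow> continuous_on {0<..1} h \<longrightarrow>
           (\<forall>t\<in>{0<..1}. 0 \<le> H t \<and> 0 \<le> h t) \<longrightarrow>
           0 < \<kappa> \<longrightarrow> \<kappa> < 1/4 \<longrightarrow> 0 \<le> \<gamma> \<longrightarrow>
           (\<forall>r\<in>{\<kappa>..1/2}.
              (\<forall>t\<in>{r..2*r}. H t \<le> C0 * H (2*r)) \<and>
              (\<forall>t\<in>{r..2*r}. \<forall>s\<in>{r..2*r}. \<bar>h t - h s\<bar> \<le> C0 * H (2*r)) \<and>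
              H (\<theta> * r) \<le> H r / 2 +
                 C0 * (\<omega>1 (\<kappa> / r) + \<omega>2 r + \<gamma>) * (H (2*r) + h (2*r))) \<longrightarrow>
           \<gamma> \<le> (\<lambda>_. 1::real) C0 / \<bar>ln \<kappa>\<bar> \<longrightarrow>
           (\<forall>r\<in>{\<kappa>..1}. H r + h r \<le> C * (H 1 + h 1)))"
    using main_inner by simp
qed

end
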